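(* Let $\mathcal C$ be a real polynomial curve. If there exist a point $P_0\in\mathbb R^2$ and an angle $\theta\in(0,2\pi)$ such that the rotation of center $P_0$ and angle $\theta$ maps $\mathcal C$ onto itself, then $\theta=\pi$. That is, the only form of rotation symmetry a real polynomial curve can have is central symmetry.
   Context: A real polynomial curve is the plane curve $\mathcal C=\{(x(t),y(t)) : t\in\mathbb R\}\subset\mathbb R^2$ given by a parametrization $\varphi(t)=(x(t),y(t))$ with $x(t),y(t)\in\mathbb R[t]$ not both constant. $\mathcal C$ has rotation symmetry if some rotation of center $P_0$ and angle $\theta\in(0,2\pi)$ maps $\mathcal C$ onto itself; when $\theta=\pi$ this is called central symmetry (symmetry with respect to the point $P_0$, the center of symmetry). *)

theory Defs
  imports "HOL-Analysis.Analysis" "HOL-Computational_Algebra.Polynomial"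
begin

definition poly_curve :: "real poly \<Rightarrow> real poly \<Rightarrow> (real \<times> real) set" where
  "poly_curve x y = range (\<lambda>t. (poly x t, poly y t))"

definition rotation :: "real \<times> real \<Rightarrow> real \<Rightarrow> real \<times> real \<Rightarrow> real \<times> real" where
  "rotation P0 \<theta> P =
     (fst P0 + cos \<theta> * (fst P - fst P0) - sin \<theta> * (snd P - snd P0),
      snd P0 + sin \<theta> * (fst P - fst P0) + cos \<theta> * (snd P - snd P0))"

end

theory Submission
  imports Defs
begin

lemma ev1:
  fixes p q :: "real poly"
  assumes "degree q < degree p" "e > 0"
  shows "eventually (\<lambda>t. \<bar>poly q t / poly p t\<bar> < e) at_infinity"
proof -
  have "((\<lambda>t. poly q t / poly p t) \<longlongrightarrow> 0) at_infinity"
    by (rule poly_divide_tendsto_0_at_infinity[where 'a=real, OF assms(1)])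
  then have "((\<lambda>t. \<bar>poly q t / poly p t\<bar>) \<longlongrightarrow> 0) at_infinity"
    by (rule tendsto_rabs_zero)
  then show ?thesis using assms(2) by (rule order_tendstoD(2))
qed
lemma ev2:
  fixes p :: "real poly"
  assumes "degree p > 0"
  shows "eventually (\<lambda>t. 1 \<le> norm (poly p t)) at_infinity"
    proof -
    have "filterlim (poly p) at_infinity at_infinity" by (rule filterlim_poly_at_infinity[OF assms])
    then have "\<forall>r>0. eventually (\<lambda>t. r \<le> norm (poly p t)) at_infinity"
      by (simp add: filterlim_at_infinity[of 0])
    then show ?thesis by simp
  qed
lemma sublin:
  fixes p q :: "real poly"
  assumes "degree q < degree p" "e > 0"
  shows "\<exists>M. \<forall>t. \<bar>poly q t\<bar> \<le> e * \<bar>poly p t\<bar> + M"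
proof -
  have "eventually (\<lambda>t. \<bar>poly q t / poly p t\<bar> < e) at_infinity"
    by (rule ev1[OF assms])
  moreover have "eventually (\<lambda>t. 1 \<le> norm (poly p t)) at_infinity"
    using assms(1) by (intro ev2) simp
  ultimately have "eventually (\<lambda>t. \<bar>poly q t\<bar> \<le> e * \<bar>poly p t\<bar>) at_infinity"
  proof eventually_elim
    case (elim t)
    then have "poly p t \<noteq> 0" by auto
    with elim show ?case by (simp add: abs_divide field_simps)
  qed
  then obtain R where R: "\<And>t. R \<le> norm t \<Longrightarrow> \<bar>poly q t\<bar> \<le> e * \<bar>poly p t\<bar>"
    unfolding eventually_at_infinity by blast
  have "bounded (poly q ` cball 0 R)"
    by (intro compact_imp_bounded compact_continuous_image continuous_on_poly continuous_on_id compact_cball)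
  then obtain M where M: "\<And>y. y \<in> poly q ` cball 0 R \<Longrightarrow> norm y \<le> M"
    unfolding bounded_iff by blast
  show ?thesis
  proof (intro exI[of _ "max M 0"] allI)
    fix t
    show "\<bar>poly q t\<bar> \<le> e * \<bar>poly p t\<bar> + max M 0"
    proof (cases "R \<le> norm t")
      case True
      with R[OF True] show ?thesis by linarith
    next
      case False
      then have "norm (poly q t) \<le> M" by (intro M) auto
      moreover have "0 \<le> e * \<bar>poly p t\<bar>" using assms(2) by simp
      ultimately show ?thesis by simp
    qed
  qed
qed

lemma unbounded:
  fixes p :: "real poly"
  assumes "degree p > 0"
  shows "\<exists>t. B < \<bar>poly p t\<bar>"
proof -
  have "filterlim (poly p) at_infinity at_infinity" by (rule filterlim_poly_at_infinity[OF assms])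
  then have "\<forall>r>0. eventually (\<lambda>t. r \<le> norm (poly p t)) at_infinity"
    by (simp add: filterlim_at_infinity[of 0])
  then have "eventually (\<lambda>t. max B 0 + 1 \<le> norm (poly p t)) at_infinity"
    by (metis add_pos_nonneg max.cobounded2 zero_less_one add.commute)
  then obtain b where "\<And>t. b \<le> norm t \<Longrightarrow> max B 0 + 1 \<le> norm (poly p t)"
    unfolding eventually_at_infinity by blast
  from this[of "\<bar>b\<bar>"] have "max B 0 + 1 \<le> \<bar>poly p \<bar>b\<bar>\<bar>" by simp
  then show ?thesis by (intro exI[of _ "\<bar>b\<bar>"]) linarith
qed

theorem theorem1:
  fixes x y :: "real poly" and P0 :: "real \<times> real" and \<theta> :: real
  assumes "degree x > 0 \<or> degree y > 0"
    and "0 < \<theta>" and "\<theta> < 2 * pi"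
    and "rotation P0 \<theta> ` poly_curve x y = poly_curve x y"
  shows "\<theta> = pi"
proof (rule ccontr)
  assume ne: "\<theta> \<noteq> pi"
  have sn: "sin \<theta> \<noteq> 0"
  proof
    assume "sin \<theta> = 0"
    then obtain i :: int where i: "\<theta> = of_int i * pi" by (auto simp: sin_zero_iff_int2)
    have "0 < real_of_int i" "real_of_int i < (2::real)" using assms(2,3) i pi_gt_zero
      by (auto simp: zero_less_mult_iff mult_less_cancel_right)
    then have "0 < i" "i < 2" by simp_all
    then have "i = 1" by linarith
    with i ne show False by simp
  qed
  define d where "d = max (degree x) (degree y)"
  define a where "a = coeff x d"
  define b where "b = coeff y d"
  have d0: "d > 0" using assms(1) by (auto simp: d_def)
  have ab: "a \<noteq> 0 \<or> b \<noteq> 0" using assms(1)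
    unfolding a_def b_def d_def by (cases "degree x \<le> degree y") (auto simp: max_def)
  define p where "p = smult a x + smult b y"
  define q where "q = smult a y - smult b x"
  have dx: "degree x \<le> d" and dy: "degree y \<le> d" by (auto simp: d_def)
  have "coeff p d = a^2 + b^2" by (simp add: p_def a_def b_def power2_eq_square)
  moreover have "a^2 + b^2 \<noteq> 0" using ab by (simp add: sum_power2_eq_zero_iff)
  moreover have "degree p \<le> d" unfolding p_def
    using dx dy by (intro degree_add_le) (auto intro: order.trans[OF degree_smult_le])
  ultimately have dp: "degree p = d" by (metis le_antisym le_degree)
  have cq: "coeff q d = 0" by (simp add: q_def a_def b_def)
  have "degree q \<le> d" unfolding q_def
    using dx dy by (intro degree_diff_le) (auto intro: order.trans[OF degree_smult_le])
  with cq d0 have dq: "degree q < d"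
    by (metis le_neq_implies_less leading_coeff_0_iff degree_0)
  define s where "s = \<bar>sin \<theta>\<bar>"
  have s0: "s > 0" using sn by (simp add: s_def)
  have s1: "s \<le> 1" by (simp add: s_def)
  define e where "e = s / 4"
  obtain M where M: "\<And>t. \<bar>poly q t\<bar> \<le> e * \<bar>poly p t\<bar> + M"
    using sublin[of q p e] dq dp s0 by (auto simp: e_def)
  define P1 where "P1 = fst P0" define P2 where "P2 = snd P0"
  define c1 where "c1 = a * P2 - b * P1 - sin \<theta> * (a * P1 + b * P2) - cos \<theta> * (a * P2 - b * P1)"
  define c2 where "c2 = a * P1 + b * P2 - cos \<theta> * (a * P1 + b * P2) + sin \<theta> * (a * P2 - b * P1)"
  have key: "\<bar>sin \<theta> * poly p t + cos \<theta> * poly q t + c1\<bar>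
      \<le> e * \<bar>cos \<theta> * poly p t - sin \<theta> * poly q t + c2\<bar> + M" for t
  proof -
    have "rotation P0 \<theta> (poly x t, poly y t) \<in> poly_curve x y"
      using assms(4) unfolding poly_curve_def by blast
    then obtain u where u: "rotation P0 \<theta> (poly x t, poly y t) = (poly x u, poly y u)"
      unfolding poly_curve_def by auto
    have ux: "poly x u = P1 + cos \<theta> * (poly x t - P1) - sin \<theta> * (poly y t - P2)"
      and uy: "poly y u = P2 + sin \<theta> * (poly x t - P1) + cos \<theta> * (poly y t - P2)"
      using u by (auto simp: rotation_def P1_def P2_def)
    have "poly q u = sin \<theta> * poly p t + cos \<theta> * poly q t + c1"
      unfolding q_def p_def c1_def by (simp add: ux uy algebra_simps)
    moreover have "poly p u = cos \<theta> * poly p t - sin \<theta> * poly q t + c2"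
      unfolding q_def p_def c2_def by (simp add: ux uy algebra_simps)
    ultimately show ?thesis using M[of u] by simp
  qed
  define C where "C = \<bar>c1\<bar> + \<bar>c2\<bar> + 3 * \<bar>M\<bar> + 1"
  obtain t where t: "8 * C / s < \<bar>poly p t\<bar>"
    using unbounded[of p] dp d0 by auto
  define P where "P = poly p t" define Q where "Q = poly q t"
  have hQ: "\<bar>Q\<bar> \<le> e * \<bar>P\<bar> + M" using M[of t] by (simp add: P_def Q_def)
  have hk: "\<bar>sin \<theta> * P + cos \<theta> * Q + c1\<bar> \<le> e * \<bar>cos \<theta> * P - sin \<theta> * Q + c2\<bar> + M"
    using key[of t] by (simp add: P_def Q_def)
  have cs: "\<bar>cos \<theta>\<bar> \<le> 1" "\<bar>sin \<theta>\<bar> \<le> 1" by auto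
  have "\<bar>sin \<theta> * P\<bar> - \<bar>Q\<bar> - \<bar>c1\<bar> \<le> \<bar>sin \<theta> * P + cos \<theta> * Q + c1\<bar>"
  proof -
    have "\<bar>cos \<theta> * Q\<bar> \<le> \<bar>Q\<bar>" using cs by (simp add: abs_mult mult_left_le_one_le)
    then show ?thesis by linarith
  qed
  moreover have "\<bar>cos \<theta> * P - sin \<theta> * Q + c2\<bar> \<le> \<bar>P\<bar> + \<bar>Q\<bar> + \<bar>c2\<bar>"
  proof -
    have "\<bar>cos \<theta> * P\<bar> \<le> \<bar>P\<bar>" "\<bar>sin \<theta> * Q\<bar> \<le> \<bar>Q\<bar>" using cs
      by (simp_all add: abs_mult mult_left_le_one_le)
    then show ?thesis by linarith
  qed
  moreover have e0: "e \<le> 1/4" "e > 0" using s0 s1 by (auto simp: e_def)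
  moreover have "\<bar>sin \<theta> * P\<bar> = s * \<bar>P\<bar>" by (simp add: s_def abs_mult)
  moreover have "e * \<bar>cos \<theta> * P - sin \<theta> * Q + c2\<bar> \<le> e * (\<bar>P\<bar> + \<bar>Q\<bar> + \<bar>c2\<bar>)"
    using e0 calculation(2) by (intro mult_left_mono) auto
  ultimately have A: "s * \<bar>P\<bar> - \<bar>Q\<bar> - \<bar>c1\<bar> \<le> e * (\<bar>P\<bar> + \<bar>Q\<bar> + \<bar>c2\<bar>) + M"
    using hk by linarith
  have "e * \<bar>Q\<bar> \<le> e * (e * \<bar>P\<bar> + M)" using hQ e0 by (intro mult_left_mono) auto
  moreover have "e * M \<le> \<bar>M\<bar>"
  proof -
    have "e * M \<le> e * \<bar>M\<bar>" using e0 by (intro mult_left_mono) auto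
    also have "\<dots> \<le> 1 * \<bar>M\<bar>" using e0 by (intro mult_right_mono) auto
    finally show ?thesis by simp
  qed
  moreover have "e * \<bar>c2\<bar> \<le> 1 * \<bar>c2\<bar>" using e0 by (intro mult_right_mono) auto
  moreover have "e * (\<bar>P\<bar> + \<bar>Q\<bar> + \<bar>c2\<bar>) = e * \<bar>P\<bar> + e * \<bar>Q\<bar> + e * \<bar>c2\<bar>"
    by (simp add: algebra_simps)
  moreover have "e * (e * \<bar>P\<bar> + M) = e * e * \<bar>P\<bar> + e * M" by (simp add: algebra_simps)
  ultimately have B: "s * \<bar>P\<bar> \<le> 2 * (e * \<bar>P\<bar>) + e * e * \<bar>P\<bar> + C"
    using A hQ unfolding C_def by linarith
  have h1: "e * e * \<bar>P\<bar> \<le> (1/4) * (e * \<bar>P\<bar>)"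
  proof -
    have "e * e \<le> (1/4) * e" using e0 by (intro mult_right_mono) auto
    then have "e * e * \<bar>P\<bar> \<le> ((1/4) * e) * \<bar>P\<bar>" by (rule mult_right_mono) simp
    then show ?thesis by simp
  qed
  have h2: "e * \<bar>P\<bar> = (s * \<bar>P\<bar>) / 4" by (simp add: e_def)
  have G: "\<And>X Y Z. Y \<le> 1/4 * X \<Longrightarrow> X = Z / 4 \<Longrightarrow> Z \<le> 2 * X + Y + C \<Longrightarrow> 0 \<le> Z \<Longrightarrow> Z \<le> (3/4) * Z + C"
    by linarith
  have h4: "0 \<le> s * \<bar>P\<bar>" using s0 by simp
  have "s * \<bar>P\<bar> \<le> (3/4) * (s * \<bar>P\<bar>) + C"
    by (rule G[OF h1 h2 B h4])
  then have "s * \<bar>P\<bar> \<le> 4 * C" by linarith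
  moreover have "8 * C < s * \<bar>P\<bar>" using t s0 by (simp add: P_def field_simps)
  moreover have "C > 0" by (simp add: C_def add_pos_nonneg)
  ultimately show False by linarith
qed

end
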